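(* Let $A\in\mathbb{R}^{n\times n}$ and $b\in\mathbb{R}^n$. Suppose that $A$ satisfies either (a) $A-I$ is an $M$-matrix, or (b) $\mathcal{N}(A^\top-I)=\mathrm{span}(v)$ for some vector $v>0$, and $A-I+D$ is an $M$-matrix for every diagonal matrix $D=\mathrm{diag}(d)$ with $d\ge 0$ and $d\neq 0$. If $A$ satisfies (b), assume in addition that $v^\top b<0$. Then the absolute value equation $Ax-|x|-b=0$ has a solution $x\in\mathbb{R}^n$, and this solution is unique.
   Context: For $x\in\mathbb{R}^n$, $|x|=(|x_1|,\dots,|x_n|)^\top$. A matrix is a $Z$-matrix if all its off-diagonal entries are $\le 0$; a $Z$-matrix $A$ is an $M$-matrix if $A$ is nonsingular and $A^{-1}\ge 0$ (entrywise). Vector inequalities are entrywise; $v>0$ means all entries of $v$ are strictly positive. $\mathcal{N}(X)$ denotes the null space of $X$. *)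

theory Defs
  imports "HOL-Analysis.Analysis"
begin

definition vabs :: "real^'n \<Rightarrow> real^'n" where
  "vabs x = (\<chi> i. \<bar>x $ i\<bar>)"

definition Z_matrix :: "real^'n^'n \<Rightarrow> bool" where
  "Z_matrix A \<longleftrightarrow> (\<forall>i j. i \<noteq> j \<longrightarrow> A $ i $ j \<le> 0)"

definition M_matrix :: "real^'n^'n \<Rightarrow> bool" where
  "M_matrix A \<longleftrightarrow> Z_matrix A \<and> invertible A \<and> (\<forall>i j. matrix_inv A $ i $ j \<ge> 0)"

definition diag_mat :: "real^'n \<Rightarrow> real^'n^'n" where
  "diag_mat d = (\<chi> i j. if i = j then d $ i else 0)"

definition null_space :: "real^'n^'n \<Rightarrow> (real^'n) set" where
  "null_space X = {x. X *v x = 0}"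

end

theory Submission
  imports Defs
begin

lemma mvc: "(M *v x) $ i = (\<Sum>j\<in>UNIV. M$i$j * x$j)"
  by (simp add: matrix_vector_mult_def)

lemma diag_mvc: "((B + diag_mat d) *v x) $ i = (B *v x)$i + d$i * x$i"
proof -
  have "((B + diag_mat d) *v x) $ i = (\<Sum>j\<in>UNIV. B$i$j * x$j + (if i = j then d$i * x$j else 0))"
    by (auto simp add: matrix_vector_mult_def diag_mat_def algebra_simps intro!: sum.cong)
  also have "\<dots> = (B *v x)$i + d$i * x$i"
    by (simp add: sum.distrib matrix_vector_mult_def)
  finally show ?thesis .
qed

lemma inv_props:
  fixes M :: "real^'n^'n"
  assumes "invertible M"
  shows "M ** matrix_inv M = mat 1" "matrix_inv M ** M = mat 1"
proof -
  have "\<exists>A'. M ** A' = mat 1 \<and> A' ** M = mat 1" using assms by (simp add: invertible_def)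
  then have "M ** matrix_inv M = mat 1 \<and> matrix_inv M ** M = mat 1"
    unfolding matrix_inv_def by (rule someI_ex)
  then show "M ** matrix_inv M = mat 1" "matrix_inv M ** M = mat 1" by auto
qed

lemma inv_mv:
  fixes M :: "real^'n^'n"
  assumes "invertible M"
  shows "M *v (matrix_inv M *v z) = z" "matrix_inv M *v (M *v z) = z"
  using inv_props[OF assms] by (simp_all add: matrix_vector_mul_assoc)

lemma inv_ker:
  fixes M :: "real^'n^'n"
  assumes "invertible M" "M *v z = 0"
  shows "z = 0"
  using inv_mv(2)[OF assms(1), of z] assms(2) by simp

lemma mono_lemma:
  fixes M :: "real^'n^'n"
  assumes off: "\<And>i j. i \<noteq> j \<Longrightarrow> M$i$j \<le> 0"
    and upos: "\<And>i. u$i > 0" and Mu: "\<And>i. (M *v u)$i > 0"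
    and Mz: "\<And>i. (M *v z)$i \<ge> 0"
  shows "z$k \<ge> 0"
proof -
  define r where "r j = z$j / u$j" for j
  define m where "m = Min (range r)"
  have "m \<in> range r" unfolding m_def by (rule Min_in) auto
  then obtain i where ri: "r i = m" by auto
  have rle: "r i \<le> r j" for j unfolding ri m_def by (rule Min_le) auto
  define t where "t = r i"
  have zge: "z$j \<ge> t * u$j" for j
  proof -
    have "t \<le> z$j / u$j" using rle[of j] unfolding t_def r_def by simp
    then show ?thesis using upos[of j] by (simp add: pos_le_divide_eq)
  qed
  have zi: "z$i = t * u$i" unfolding t_def r_def using upos[of i] by simp
  have t0: "t \<ge> 0"
  proof (rule ccontr)
    assume "\<not> t \<ge> 0"
    then have tn: "t < 0" by simp
    have "(M *v z)$i = (\<Sum>j\<in>UNIV. M$i$j * z$j)" by (rule mvc)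
    also have "\<dots> \<le> (\<Sum>j\<in>UNIV. M$i$j * (t * u$j))"
    proof (rule sum_mono)
      fix j
      show "M$i$j * z$j \<le> M$i$j * (t * u$j)"
      proof (cases "j = i")
        case True then show ?thesis using zi by simp
      next
        case False
        then show ?thesis using off[of i j] zge[of j] by (simp add: mult_left_mono_neg)
      qed
    qed
    also have "\<dots> = t * (M *v u)$i" by (simp add: mvc sum_distrib_left algebra_simps)
    also have "\<dots> < 0" using tn Mu[of i] by (simp add: mult_neg_pos)
    finally show False using Mz[of i] by simp
  qed
  show ?thesis using zge[of k] t0 upos[of k] by (smt (verit) mult_nonneg_nonneg)
qed

definition posv :: "real^'n \<Rightarrow> real^'n" where
  "posv x = (\<chi> i. max (x$i) 0)"

lemma exist_generic:
  fixes B :: "real^'n^'n" and b hi :: "real^'n"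
  defines "M \<equiv> B + diag_mat (\<chi> i. 2)"
  assumes Minv: "invertible M"
    and mono: "\<And>z. (\<And>i. (M *v z)$i \<ge> 0) \<Longrightarrow> (\<forall>i. z$i \<ge> 0)"
    and hi0: "\<And>i. hi$i \<ge> 0" and hib: "\<And>i. (B *v hi)$i \<ge> b$i"
  shows "\<exists>x. B *v x + (x - vabs x) = b"
proof -
  define T where "T x = matrix_inv M *v (b + 2 *\<^sub>R posv x)" for x
  define c where "c = matrix_inv M *v b"
  define lo :: "real^'n" where "lo = (\<chi> i. min (c$i) 0)"
  have MT: "M *v T x = b + 2 *\<^sub>R posv x" for x
    unfolding T_def using inv_mv(1)[OF Minv] by simp
  have Mc: "M *v c = b" unfolding c_def using inv_mv(1)[OF Minv] by simp
  have Mcomp: "(M *v z)$i = (B *v z)$i + 2 * z$i" for z i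
    unfolding M_def diag_mvc by simp
  have mapsto: "T x \<in> cbox lo hi" if "x \<in> cbox lo hi" for x
  proof -
    have xle: "x$i \<le> hi$i" for i using that by (simp add: mem_box_cart)
    have "\<forall>i. (T x - c)$i \<ge> 0"
    proof (rule mono)
      fix i
      have "M *v (T x - c) = 2 *\<^sub>R posv x" using MT Mc by (simp add: matrix_vector_mult_diff_distrib)
      then show "(M *v (T x - c))$i \<ge> 0" by (simp add: posv_def)
    qed
    then have lo_le: "lo$i \<le> T x $ i" for i unfolding lo_def by (auto simp: min_le_iff_disj)
    have "\<forall>i. (hi - T x)$i \<ge> 0"
    proof (rule mono)
      fix i
      have "(M *v (hi - T x))$i = (B *v hi)$i + 2 * hi$i - b$i - 2 * max (x$i) 0"
        using MT[of x] by (simp add: matrix_vector_mult_diff_distrib Mcomp posv_def)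
      then show "(M *v (hi - T x))$i \<ge> 0" using hib[of i] hi0[of i] xle[of i] by simp
    qed
    then have "T x $ i \<le> hi$i" for i by auto
    then show ?thesis using lo_le by (simp add: mem_box_cart)
  qed
  have "0 \<in> cbox lo hi"
    using hi0 unfolding lo_def by (auto simp: mem_box_cart)
  then have ne: "cbox lo hi \<noteq> {}" by blast
  have c1: "continuous_on (cbox lo hi) (\<lambda>x. b + 2 *\<^sub>R posv x)"
    unfolding posv_def by (intro continuous_intros)
  have cont: "continuous_on (cbox lo hi) T"
    unfolding T_def
    by (rule continuous_on_compose2[OF matrix_vector_mult_linear_continuous_on[of UNIV] c1]) simp
  obtain x where "x \<in> cbox lo hi" "T x = x"
    using brouwer[OF compact_cbox convex_box(1) ne cont] mapsto by blast
  then have "M *v x = b + 2 *\<^sub>R posv x" using MT[of x] by simp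
  then have "(B *v x)$i + 2 * x$i = b$i + 2 * max (x$i) 0" for i
  proof -
    have "(M *v x)$i = (b + 2 *\<^sub>R posv x)$i" using \<open>M *v x = b + 2 *\<^sub>R posv x\<close> by simp
    then show ?thesis by (simp add: Mcomp posv_def)
  qed
  note eq = this
  have "(B *v x + (x - vabs x))$i = b$i" for i
    using eq[of i] by (simp add: vabs_def max_def abs_if split: if_splits)
  then have "B *v x + (x - vabs x) = b" by (simp add: vec_eq_iff)
  then show ?thesis by blast
qed

lemma slope_bounds:
  fixes a c :: real
  assumes "a \<noteq> c"
  shows "0 \<le> ((a - \<bar>a\<bar>) - (c - \<bar>c\<bar>)) / (a - c) \<and> ((a - \<bar>a\<bar>) - (c - \<bar>c\<bar>)) / (a - c) \<le> 2"
proof (cases "a > c")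
  case True
  then show ?thesis by (auto simp: divide_simps abs_if)
next
  case False
  then have "a < c" using assms by simp
  then show ?thesis by (auto simp: divide_simps abs_if)
qed

lemma delta_lemma:
  fixes B :: "real^'n^'n" and b x y :: "real^'n"
  assumes ex: "B *v x + (x - vabs x) = b" and ey: "B *v y + (y - vabs y) = b"
  obtains \<delta> where "\<And>i. 0 \<le> \<delta>$i \<and> \<delta>$i \<le> 2" "(B + diag_mat \<delta>) *v (x - y) = 0"
    "\<delta> = 0 \<Longrightarrow> \<forall>i. x$i \<ge> 0"
proof -
  define gf :: "real \<Rightarrow> real" where "gf t = t - \<bar>t\<bar>" for t
  define \<delta> :: "real^'n" where
    "\<delta> = (\<chi> i. if x$i = y$i then 1 else (gf (x$i) - gf (y$i)) / (x$i - y$i))"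
  have b1: "0 \<le> \<delta>$i \<and> \<delta>$i \<le> 2" for i
    unfolding \<delta>_def gf_def using slope_bounds[of "x$i" "y$i"] by auto
  have exi: "(B *v x)$i + gf (x$i) = b$i" for i
    using arg_cong[OF ex, of "\<lambda>v. v$i"] by (simp add: gf_def vabs_def)
  have eyi: "(B *v y)$i + gf (y$i) = b$i" for i
    using arg_cong[OF ey, of "\<lambda>v. v$i"] by (simp add: gf_def vabs_def)
  have dm: "\<delta>$i * (x$i - y$i) = gf (x$i) - gf (y$i)" for i
    unfolding \<delta>_def by auto
  have "((B + diag_mat \<delta>) *v (x - y))$i = 0" for i
    unfolding diag_mvc using exi[of i] eyi[of i] dm[of i]
    by (simp add: matrix_vector_mult_diff_distrib)
  then have e0: "(B + diag_mat \<delta>) *v (x - y) = 0" by (simp add: vec_eq_iff)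
  have z: "\<forall>i. x$i \<ge> 0" if "\<delta> = 0"
  proof
    fix i
    have d0: "\<delta>$i = 0" using that by simp
    then have ne: "x$i \<noteq> y$i" unfolding \<delta>_def by (auto split: if_splits)
    then have "gf (x$i) = gf (y$i)" using d0 dm[of i] by simp
    then show "x$i \<ge> 0" using ne unfolding gf_def by (auto simp: abs_if split: if_splits)
  qed
  show ?thesis using that b1 e0 z by blast
qed

lemma offdiag_diag:
  fixes B :: "real^'n^'n"
  shows "i \<noteq> j \<Longrightarrow> (B + diag_mat d)$i$j = B$i$j"
  by (simp add: diag_mat_def)

lemma caseA:
  fixes B :: "real^'n^'n" and b :: "real^'n"
  assumes MB: "M_matrix B"
  shows "\<exists>!x. B *v x + (x - vabs x) = b"
proof -
  have Binv: "invertible B" and Bnn: "\<And>i j. matrix_inv B $ i $ j \<ge> 0"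
    and Bz: "\<And>i j. i \<noteq> j \<Longrightarrow> B$i$j \<le> 0"
    using MB by (auto simp: M_matrix_def Z_matrix_def)
  define Bi where "Bi = matrix_inv B"
  define one :: "real^'n" where "one = (\<chi> i. 1)"
  define u where "u = Bi *v one"
  have Bu: "B *v u = one" unfolding u_def Bi_def using inv_mv(1)[OF Binv] by simp
  have upos: "u$i > 0" for i
  proof -
    have ui: "u$i = (\<Sum>j\<in>UNIV. Bi$i$j)" unfolding u_def one_def by (simp add: mvc)
    have nn: "\<forall>j\<in>UNIV. Bi$i$j \<ge> 0" using Bnn unfolding Bi_def by simp
    show ?thesis
    proof (rule ccontr)
      assume "\<not> u$i > 0"
      then have "(\<Sum>j\<in>UNIV. Bi$i$j) = 0" using ui nn sum_nonneg[of UNIV "\<lambda>j. Bi$i$j"] by simp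
      then have z: "\<forall>j. Bi$i$j = 0" using nn by (simp add: sum_nonneg_eq_0_iff)
      have "(Bi ** B)$i$i = (\<Sum>j\<in>UNIV. Bi$i$j * B$j$i)" by (simp add: matrix_matrix_mult_def)
      also have "\<dots> = 0" using z by simp
      finally show False using inv_props(2)[OF Binv] unfolding Bi_def by (simp add: mat_def)
    qed
  qed
  have monoD: "\<forall>i. z$i \<ge> 0" if dnn: "\<And>i. d$i \<ge> 0" and Mz: "\<And>i. ((B + diag_mat d) *v z)$i \<ge> 0"
    for d z
  proof
    fix k
    show "z$k \<ge> 0"
    proof (rule mono_lemma[of "B + diag_mat d" u z k])
      show "\<And>i j. i \<noteq> j \<Longrightarrow> (B + diag_mat d)$i$j \<le> 0" using Bz by (simp add: diag_mat_def)
      show "\<And>i. u$i > 0" by (rule upos)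
      show "\<And>i. ((B + diag_mat d) *v u)$i > 0"
      proof -
        fix i
        have "((B + diag_mat d) *v u)$i = 1 + d$i * u$i" unfolding diag_mvc Bu one_def by simp
        then show "((B + diag_mat d) *v u)$i > 0" using dnn[of i] upos[of i] by (smt (verit) mult_nonneg_nonneg)
      qed
      show "\<And>i. ((B + diag_mat d) *v z)$i \<ge> 0" by (rule Mz)
    qed
  qed
  have inj: "z = 0" if dnn: "\<And>i. d$i \<ge> 0" and Mz: "(B + diag_mat d) *v z = 0" for d z
  proof -
    have "\<forall>i. z$i \<ge> 0" using monoD[of d z] dnn Mz by simp
    moreover have "\<forall>i. (- z)$i \<ge> 0"
      proof -
      have "(B + diag_mat d) *v (- z) = - ((B + diag_mat d) *v z)" by (simp add: vec_eq_iff mvc sum_negf)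
      then show ?thesis using monoD[of d "- z"] dnn Mz by simp
    qed
    ultimately show ?thesis by (simp add: vec_eq_iff order_antisym)
  qed
  define M where "M = B + diag_mat (\<chi> i. (2::real))"
  have "\<forall>z. M *v z = 0 \<longrightarrow> z = 0"
  proof (intro allI impI)
    fix z assume "M *v z = 0"
    then show "z = 0" unfolding M_def by (rule inj[rotated]) simp
  qed
  then have Minv: "invertible M"
    unfolding invertible_left_inverse matrix_left_invertible_ker[symmetric] .
  define hi where "hi = Bi *v posv b"
  have hi0: "hi$i \<ge> 0" for i
    unfolding hi_def mvc using Bnn unfolding Bi_def by (auto intro!: sum_nonneg simp: posv_def)
  have hib: "(B *v hi)$i \<ge> b$i" for i
    unfolding hi_def Bi_def using inv_mv(1)[OF Binv] by (simp add: posv_def)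
  have ex: "\<exists>x. B *v x + (x - vabs x) = b"
  proof (rule exist_generic[OF Minv[unfolded M_def] _ hi0 hib])
    fix z assume "\<And>i. ((B + diag_mat (\<chi> i. 2)) *v z)$i \<ge> 0"
    then show "\<forall>i. z$i \<ge> 0" by (rule monoD[rotated]) simp
  qed
  have un: "x = y" if ex: "B *v x + (x - vabs x) = b" and ey: "B *v y + (y - vabs y) = b" for x y
  proof -
    obtain \<delta> where d: "\<And>i. 0 \<le> \<delta>$i \<and> \<delta>$i \<le> 2" "(B + diag_mat \<delta>) *v (x - y) = 0"
      using delta_lemma[OF ex ey] by blast
    have "x - y = 0" using inj[of \<delta> "x - y"] d by simp
    then show ?thesis by simp
  qed
  show ?thesis using ex un by blast
qed

lemma caseB:
  fixes B :: "real^'n^'n" and b v :: "real^'n"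
  assumes vpos: "\<And>i. v$i > 0" and nsp: "null_space (transpose B) = span {v}"
    and Md: "\<And>d. (\<forall>i. d$i \<ge> 0) \<and> d \<noteq> 0 \<longrightarrow> M_matrix (B + diag_mat d)"
    and vb: "v \<bullet> b < 0"
  shows "\<exists>!x. B *v x + (x - vabs x) = b"
proof -
  have "v \<in> null_space (transpose B)" using nsp by (simp add: span_base)
  then have BTv: "transpose B *v v = 0" by (simp add: null_space_def)
  have vdot: "v \<bullet> (B *v z) = 0" for z
    using dot_lmul_matrix[of v B z] BTv by (simp flip: transpose_matrix_vector)
  have vne: "v \<noteq> 0" using vpos by (metis less_irrefl zero_index)
  have vv: "v \<bullet> v > 0" using vne by simp
  define two :: "real^'n" where "two = (\<chi> i. 2)"
  define M where "M = B + diag_mat two"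
  have "M_matrix M" unfolding M_def
    using Md[of two] by (simp add: two_def vec_eq_iff)
  then have Minv: "invertible M" and Mnn: "\<And>i j. matrix_inv M $ i $ j \<ge> 0"
    by (auto simp: M_matrix_def)
  define P where "P = matrix_inv M"
  have Mcomp: "(M *v z)$i = (B *v z)$i + 2 * z$i" for z i
    unfolding M_def diag_mvc two_def by simp
  have Mvec: "M *v z = B *v z + 2 *\<^sub>R z" for z
    by (simp add: vec_eq_iff Mcomp)
  have monoM: "\<forall>i. z$i \<ge> 0" if "\<And>i. (M *v z)$i \<ge> 0" for z
  proof
    fix i
    have "z$i = (P *v (M *v z))$i" unfolding P_def inv_mv(2)[OF Minv] ..
    also have "\<dots> = (\<Sum>j\<in>UNIV. P$i$j * (M *v z)$j)" by (rule mvc)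
    also have "\<dots> \<ge> 0" unfolding P_def using Mnn that by (auto intro!: sum_nonneg)
    finally show "z$i \<ge> 0" .
  qed
  have "\<not> invertible B"
  proof
    assume Bi: "invertible B"
    have "transpose (matrix_inv B) ** transpose B = mat 1"
      using inv_props(1)[OF Bi] by (metis matrix_transpose_mul transpose_mat)
    then have "v = transpose (matrix_inv B) *v (transpose B *v v)"
      by (metis matrix_vector_mul_assoc matrix_vector_mul_lid)
    then show False using BTv vne by simp
  qed
  then obtain y0 where y0: "B *v y0 = 0" "y0 \<noteq> 0"
    unfolding invertible_left_inverse matrix_left_invertible_ker by blast
  define a where "a = vabs y0"
  have a0: "a$i \<ge> 0" for i unfolding a_def vabs_def by simp
  have ane: "a \<noteq> 0"
  proof
    assume "a = 0"
    then have "y0$i = 0" for i unfolding a_def vabs_def by (metis abs_eq_0 vec_lambda_beta zero_index)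
    then show False using y0(2) by (simp add: vec_eq_iff)
  qed
  have My0: "M *v y0 = 2 *\<^sub>R y0" using Mvec y0(1) by simp
  have y0P: "y0 = P *v (2 *\<^sub>R y0)" unfolding P_def using inv_mv(2)[OF Minv, of y0] My0 by simp
  define q where "q = P *v (2 *\<^sub>R a) - a"
  have q0: "q$i \<ge> 0" for i
  proof -
    have "\<bar>y0$i\<bar> = \<bar>\<Sum>j\<in>UNIV. P$i$j * (2 * y0$j)\<bar>"
      using arg_cong[OF y0P, of "\<lambda>z. \<bar>z$i\<bar>"] by (simp add: mvc)
    also have "\<dots> \<le> (\<Sum>j\<in>UNIV. \<bar>P$i$j * (2 * y0$j)\<bar>)" by (rule sum_abs)
    also have "\<dots> = (\<Sum>j\<in>UNIV. P$i$j * (2 * a$j))"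
      using Mnn unfolding P_def a_def vabs_def by (simp add: abs_mult)
    finally show ?thesis unfolding q_def a_def by (simp add: mvc vabs_def)
  qed
  have vP: "v \<bullet> (P *v w) = (1/2) * (v \<bullet> w)" for w
  proof -
    have "v \<bullet> w = v \<bullet> (M *v (P *v w))" unfolding P_def inv_mv(1)[OF Minv] ..
    also have "\<dots> = 2 * (v \<bullet> (P *v w))" unfolding Mvec by (simp add: inner_add_right vdot)
    finally show ?thesis by simp
  qed
  have "v \<bullet> q = 0" unfolding q_def by (simp add: inner_diff_right vP)
  then have "(\<Sum>i\<in>UNIV. v$i * q$i) = 0" by (simp add: inner_vec_def)
  then have "\<forall>i\<in>UNIV. v$i * q$i = 0"
    by (subst sum_nonneg_eq_0_iff[symmetric]) (auto intro: mult_nonneg_nonneg less_imp_le vpos q0)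
  then have "q = 0" using vpos by (simp add: vec_eq_iff) (metis less_irrefl)
  then have Pa: "P *v (2 *\<^sub>R a) = a" unfolding q_def by simp
  have "M *v a = 2 *\<^sub>R a" using inv_mv(1)[OF Minv, of "2 *\<^sub>R a"] Pa unfolding P_def by simp
  then have Ba: "B *v a = 0" unfolding Mvec by simp
  have apos: "a$i > 0" for i
  proof (rule ccontr)
    assume "\<not> a$i > 0"
    then have ai: "a$i = 0" using a0[of i] by simp
    define d :: "real^'n" where "d = (\<chi> j. if a$j = 0 then 1 else 0)"
    have di: "d$i = 1" using ai unfolding d_def by simp
    have "d \<noteq> 0"
    proof
      assume "d = 0"
      then have "d$i = 0" by simp
      then show False using di by simp
    qed
    moreover have "\<forall>j. d$j \<ge> 0" unfolding d_def by simp
    ultimately have "invertible (B + diag_mat d)" using Md[of d] by (simp add: M_matrix_def)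
    moreover have "(B + diag_mat d) *v a = 0"
      by (simp add: vec_eq_iff diag_mvc Ba d_def)
    ultimately have "a = 0" by (rule inv_ker)
    then show False using ane by simp
  qed
  define \<alpha> where "\<alpha> = (v \<bullet> b) / (v \<bullet> v)"
  have \<alpha>neg: "\<alpha> < 0" unfolding \<alpha>_def using vb vv by (simp add: divide_neg_pos)
  obtain yy zz where yz: "yy \<in> span (range ((*v) B))"
    "\<And>w. w \<in> span (range ((*v) B)) \<Longrightarrow> orthogonal zz w" "b - \<alpha> *\<^sub>R v = yy + zz"
    using orthogonal_subspace_decomp_exists by blast
  have "yy \<in> range ((*v) B)" using yz(1)
    by (simp add: span_linear_image[OF matrix_vector_mul_linear])
  then obtain w where w: "yy = B *v w" by auto
  define e where "e = transpose B *v zz"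
  have "orthogonal zz (B *v e)" by (rule yz(2)) (auto intro: span_base)
  then have "zz \<bullet> (B *v e) = 0" by (simp add: orthogonal_def)
  then have "e \<bullet> e = 0" using dot_lmul_matrix[of zz B e] unfolding e_def
    by (simp flip: transpose_matrix_vector)
  then have "e = 0" by simp
  then have "zz \<in> span {v}" using nsp unfolding e_def null_space_def by auto
  then obtain k where k: "zz = k *\<^sub>R v" by (auto simp: span_singleton scalar_mult_eq_scaleR)
  have "v \<bullet> (b - \<alpha> *\<^sub>R v) = 0" unfolding \<alpha>_def using vv by (simp add: inner_diff_right)
  then have "k * (v \<bullet> v) = 0" using yz(3) w k vdot by (simp add: inner_add_right)
  then have "k = 0" using vv by simp
  then have Bw: "B *v w = b - \<alpha> *\<^sub>R v" using yz(3) w k by simp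
  define K where "K = (\<Sum>i\<in>UNIV. \<bar>w$i\<bar> / a$i)"
  define hi where "hi = w + K *\<^sub>R a"
  have hi0: "hi$i \<ge> 0" for i
  proof -
    have "\<bar>w$i\<bar> / a$i \<le> K" unfolding K_def
      by (rule member_le_sum) (use apos in \<open>auto intro: divide_nonneg_pos\<close>)
    then have "\<bar>w$i\<bar> \<le> K * a$i" using apos[of i] by (simp add: divide_le_eq)
    then show ?thesis unfolding hi_def by simp
  qed
  have hib: "(B *v hi)$i \<ge> b$i" for i
  proof -
    have "B *v hi = b - \<alpha> *\<^sub>R v" unfolding hi_def
      by (simp add: matrix_vector_right_distrib matrix_vector_mult_scaleR Ba Bw)
    moreover have "\<alpha> * v$i \<le> 0" using \<alpha>neg vpos[of i] by (simp add: mult_nonpos_nonneg)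
    ultimately show ?thesis by simp
  qed
  have ex: "\<exists>x. B *v x + (x - vabs x) = b"
    by (rule exist_generic[OF Minv[unfolded M_def two_def] _ hi0 hib])
       (use monoM in \<open>simp add: M_def two_def\<close>)
  have un: "x = y" if ex: "B *v x + (x - vabs x) = b" and ey: "B *v y + (y - vabs y) = b" for x y
  proof -
    obtain \<delta> where d: "\<And>i. 0 \<le> \<delta>$i \<and> \<delta>$i \<le> 2" "(B + diag_mat \<delta>) *v (x - y) = 0"
      "\<delta> = 0 \<Longrightarrow> \<forall>i. x$i \<ge> 0"
      using delta_lemma[OF ex ey] by blast
    show ?thesis
    proof (cases "\<delta> = 0")
      case True
      then have "vabs x = x" using d(3) by (simp add: vec_eq_iff vabs_def)
      then have "B *v x = b" using ex by simp
      then show ?thesis using vdot[of x] vb by simp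
    next
      case False
      then have "invertible (B + diag_mat \<delta>)" using Md[of \<delta>] d(1) by (simp add: M_matrix_def)
      then have "x - y = 0" using d(2) by (rule inv_ker)
      then show ?thesis by simp
    qed
  qed
  show ?thesis using ex un by blast
qed

theorem theorem3p2:
  fixes A :: "real^'n^'n" and b :: "real^'n"
  assumes "M_matrix (A - mat 1)
        \<or> (\<exists>v. (\<forall>i. v $ i > 0) \<and> null_space (transpose A - mat 1) = span {v}
               \<and> (\<forall>d. (\<forall>i. d $ i \<ge> 0) \<and> d \<noteq> 0 \<longrightarrow> M_matrix (A - mat 1 + diag_mat d))
               \<and> v \<bullet> b < 0)"
  shows "\<exists>!x. A *v x - vabs x - b = 0"
proof -
  define B where "B = A - mat 1"
  have eqv: "(A *v x - vabs x - b = 0) \<longleftrightarrow> (B *v x + (x - vabs x) = b)" for x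
  proof -
    have "B *v x = A *v x - x" unfolding B_def by (simp add: matrix_vector_mult_diff_rdistrib)
    then show ?thesis by (auto simp: algebra_simps)
  qed
  have tr: "transpose A - mat 1 = transpose B"
    unfolding B_def by (simp add: vec_eq_iff transpose_def mat_def)
  have "\<exists>!x. B *v x + (x - vabs x) = b"
    using assms
  proof
    assume "M_matrix (A - mat 1)"
    then show ?thesis unfolding B_def by (rule caseA)
  next
    assume "\<exists>v. (\<forall>i. v $ i > 0) \<and> null_space (transpose A - mat 1) = span {v}
               \<and> (\<forall>d. (\<forall>i. d $ i \<ge> 0) \<and> d \<noteq> 0 \<longrightarrow> M_matrix (A - mat 1 + diag_mat d))
               \<and> v \<bullet> b < 0"
    then obtain v where v: "\<forall>i. v $ i > 0" "null_space (transpose B) = span {v}"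
      "\<forall>d. (\<forall>i. d $ i \<ge> 0) \<and> d \<noteq> 0 \<longrightarrow> M_matrix (B + diag_mat d)" "v \<bullet> b < 0"
      unfolding tr B_def by blast
    show ?thesis by (rule caseB[of v]) (use v in auto)
  qed
  then show ?thesis using eqv by simp
qed

end
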